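(* Let $d\ge 3$ and let $A=\lambda B+(1-\lambda)B'$ with $0<\lambda<1$, where $B,B'$ are $d$-dimensional $(0,1)$-matrices of order $4$ each equivalent to $\mathcal{M}_4^d$. If the tessellation index of $A$ (with respect to $B,B'$) is $-\infty$, i.e. no filled subcube of $B$ intersects any filled subcube of $B'$, then $\operatorname{per}A>0$.
   Context: $\mathcal{M}_4^d$ has entry $1$ at $\alpha$ iff $\alpha_1+\dots+\alpha_d\equiv0\pmod 4$. Equivalence: permuting coordinate positions and/or applying a permutation of $\{0,1,2,3\}$ to a single coordinate, repeatedly. A diagonal is a set of $4$ indices any two of which differ in every coordinate; $\operatorname{per}A=\sum_p\prod_{\alpha\in p}a_\alpha$ over diagonals. Define $p_1,p_2,p_3:\{0,1,2,3\}\to\{0,1\}$ by $p_1(0)=p_1(1)=0,\ p_1(2)=p_1(3)=1$; $p_2(0)=p_2(2)=0,\ p_2(1)=p_2(3)=1$; $p_3(0)=p_3(3)=0,\ p_3(1)=p_3(2)=1$; and $\mu_1(0)=\mu_1(2)=0,\ \mu_1(1)=\mu_1(3)=1$; $\mu_2(0)=\mu_2(1)=0,\ \mu_2(2)=\mu_2(3)=1$; $\mu_3(0)=\mu_3(2)=0,\ \mu_3(1)=\mu_3(3)=1$. $Q_s^d=\{y\in\{0,1\}^d:w(y)\equiv s\pmod 2\}$ ($w$ = Hamming weight). For $\mathcal{E}\in\{1,2,3\}^d$, $s\in\{0,1\}$, $\lambda:Q_s^d\to\{0,1\}$, the block permutation with parameters $(\mathcal{E},\lambda,s)$ is the $(0,1)$-matrix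 with entry $1$ at $\alpha$ iff $\bigoplus_i p_{\varepsilon_i}(\alpha_i)=s$ and $\bigoplus_i\mu_{\varepsilon_i}(\alpha_i)\oplus\lambda(p_{\varepsilon_1}(\alpha_1),\dots,p_{\varepsilon_d}(\alpha_d))=0$. Every matrix equivalent to $\mathcal{M}_4^d$ ($d\ge3$) is a block permutation for a unique parameter triple; relative to these, its subcubes are $C_y=\{\alpha:p_{\varepsilon_i}(\alpha_i)=y_i\ \forall i\}$ and $C_y$ is filled if $w(y)\equiv s\pmod 2$. The intersection of a subcube of $B$ with a subcube of $B'$ is either empty or a product set of size $2^j$; the tessellation index of $\lambda B+(1-\lambda)B'$ is the maximum of such $j$ over pairs (filled subcube of $B$, filled subcube of $B'$) with nonempty intersection, and $-\infty$ if all such intersections are empty. *)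

theory Defs
  imports Complex_Main "HOL-Combinatorics.Permutations"
begin

text \<open>Indices of a d-dimensional matrix of order 4: functions nat => nat with
  alpha i < 4 for i < d and alpha i = 0 for i >= d.  Matrices are real-valued
  functions on such indices (values outside the index set are irrelevant).\<close>

definition idx :: "nat \<Rightarrow> (nat \<Rightarrow> nat) set" where
  "idx d = {\<alpha>. (\<forall>i<d. \<alpha> i < 4) \<and> (\<forall>i\<ge>d. \<alpha> i = 0)}"

definition M4 :: "nat \<Rightarrow> (nat \<Rightarrow> nat) \<Rightarrow> real" where
  "M4 d \<alpha> = (if (\<Sum>i<d. \<alpha> i) mod 4 = 0 then 1 else 0)"

inductive equiv_to :: "nat \<Rightarrow> ((nat \<Rightarrow> nat) \<Rightarrow> real) \<Rightarrow> ((nat \<Rightarrow> nat) \<Rightarrow> real) \<Rightarrow> bool"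
  for d :: nat and M :: "(nat \<Rightarrow> nat) \<Rightarrow> real" where
  refl: "equiv_to d M M"
| coord_perm: "equiv_to d M B \<Longrightarrow> \<pi> permutes {..<d} \<Longrightarrow>
      equiv_to d M (\<lambda>\<alpha>. B (\<alpha> \<circ> \<pi>))"
| value_perm: "equiv_to d M B \<Longrightarrow> i < d \<Longrightarrow> \<tau> permutes {..<4} \<Longrightarrow>
      equiv_to d M (\<lambda>\<alpha>. B (\<alpha>(i := \<tau> (\<alpha> i))))"

definition pp :: "nat \<Rightarrow> nat \<Rightarrow> bool" where
  "pp e x = (if e = 1 then x \<in> {2,3} else if e = 2 then x \<in> {1,3}
             else if e = 3 then x \<in> {1,2} else False)"

definition mu :: "nat \<Rightarrow> nat \<Rightarrow> bool" where
  "mu e x = (if e = 1 then x \<in> {1,3} else if e = 2 then x \<in> {2,3}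
             else if e = 3 then x \<in> {1,3} else False)"

definition xor_d :: "nat \<Rightarrow> (nat \<Rightarrow> bool) \<Rightarrow> bool" where
  "xor_d d P = odd (card {i. i < d \<and> P i})"

definition pvec :: "nat \<Rightarrow> (nat \<Rightarrow> nat) \<Rightarrow> (nat \<Rightarrow> nat) \<Rightarrow> (nat \<Rightarrow> bool)" where
  "pvec d E \<alpha> = (\<lambda>i. if i < d then pp (E i) (\<alpha> i) else False)"

definition valid_E :: "nat \<Rightarrow> (nat \<Rightarrow> nat) \<Rightarrow> bool" where
  "valid_E d E = (\<forall>i<d. E i \<in> {1,2,3})"

text \<open>Block permutation with parameters (E, lam, s); s is a bit (True = 1),
  lam : Q_s^d -> {0,1} is bool-valued (only its values on Q_s^d matter).\<close>
definition block_perm :: "nat \<Rightarrow> (nat \<Rightarrow> nat) \<Rightarrow> ((nat \<Rightarrow> bool) \<Rightarrow> bool) \<Rightarrow> bool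
    \<Rightarrow> (nat \<Rightarrow> nat) \<Rightarrow> real" where
  "block_perm d E lam s \<alpha> =
     (if xor_d d (\<lambda>i. pp (E i) (\<alpha> i)) = s \<and>
         xor_d d (\<lambda>i. mu (E i) (\<alpha> i)) = lam (pvec d E \<alpha>) then 1 else 0)"

definition is_block_perm_params ::
  "nat \<Rightarrow> ((nat \<Rightarrow> nat) \<Rightarrow> real) \<Rightarrow> (nat \<Rightarrow> nat) \<Rightarrow> ((nat \<Rightarrow> bool) \<Rightarrow> bool) \<Rightarrow> bool \<Rightarrow> bool" where
  "is_block_perm_params d B E lam s =
     (valid_E d E \<and> (\<forall>\<alpha>\<in>idx d. B \<alpha> = block_perm d E lam s \<alpha>))"

definition subcube :: "nat \<Rightarrow> (nat \<Rightarrow> nat) \<Rightarrow> (nat \<Rightarrow> bool) \<Rightarrow> (nat \<Rightarrow> nat) set" where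
  "subcube d E y = {\<alpha>\<in>idx d. \<forall>i<d. pp (E i) (\<alpha> i) = y i}"

definition filled :: "nat \<Rightarrow> bool \<Rightarrow> (nat \<Rightarrow> bool) \<Rightarrow> bool" where
  "filled d s y = (xor_d d y = s)"

definition tess_neg_inf ::
  "nat \<Rightarrow> (nat \<Rightarrow> nat) \<Rightarrow> bool \<Rightarrow> (nat \<Rightarrow> nat) \<Rightarrow> bool \<Rightarrow> bool" where
  "tess_neg_inf d E s E' s' =
     (\<forall>y y'. filled d s y \<longrightarrow> filled d s' y' \<longrightarrow>
        subcube d E y \<inter> subcube d E' y' = {})"

definition diagonals :: "nat \<Rightarrow> (nat \<Rightarrow> nat) set set" where
  "diagonals d = {D. D \<subseteq> idx d \<and> card D = 4 \<and>
      (\<forall>\<alpha>\<in>D. \<forall>\<beta>\<in>D. \<alpha> \<noteq> \<beta> \<longrightarrow> (\<forall>i<d. \<alpha> i \<noteq> \<beta> i))}"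

definition per :: "nat \<Rightarrow> ((nat \<Rightarrow> nat) \<Rightarrow> real) \<Rightarrow> real" where
  "per d A = (\<Sum>D\<in>diagonals d. \<Prod>\<alpha>\<in>D. A \<alpha>)"

end

theory Submission
  imports Defs
begin

lemma xor_Suc: "xor_d (Suc d) P = (xor_d d P \<noteq> P d)"
proof -
  have e: "{i. i < Suc d \<and> P i} = (if P d then insert d {i. i < d \<and> P i} else {i. i < d \<and> P i})"
    by (auto simp: less_Suc_eq)
  have f: "finite {i. i < d \<and> P i}" by (rule finite_subset[of _ "{..<d}"]) auto
  have n: "d \<notin> {i. i < d \<and> P i}" by simp
  show ?thesis unfolding xor_d_def using e f n by (auto simp: card_insert_disjoint)
qed

lemma xor_0: "xor_d 0 P = False" unfolding xor_d_def by simp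

lemma xor_neq: "xor_d d (\<lambda>i. P i \<noteq> Q i) = (xor_d d P \<noteq> xor_d d Q)"
  by (induction d) (auto simp: xor_Suc xor_0)

lemma xor_cong: assumes "\<And>i. i < d \<Longrightarrow> P i = Q i" shows "xor_d d P = xor_d d Q"
proof -
  have "{i. i<d \<and> P i} = {i. i<d \<and> Q i}" using assms by auto
  thus ?thesis unfolding xor_d_def by simp
qed

lemma xor_false: "xor_d d (\<lambda>i. False) = False" unfolding xor_d_def by simp

lemma xor_single: assumes "k < d" shows "xor_d d (\<lambda>i. i = k) = True"
proof -
  have "{i. i<d \<and> i = k} = {k}" using assms by auto
  thus ?thesis unfolding xor_d_def by simp
qed

lemma xor_flip: assumes k: "k < d" shows "xor_d d (P(k := \<not> P k)) = (\<not> xor_d d P)"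
proof -
  have "P(k := \<not> P k) = (\<lambda>i. P i \<noteq> (i = k))" by auto
  then show ?thesis using xor_neq[of d P "\<lambda>i. i = k"] xor_single[OF k] by simp
qed

lemma xor_exists: assumes k: "k < d" shows "\<exists>b. xor_d d (P(k := b)) = t"
proof (cases "xor_d d P = t")
  case True
  then have "xor_d d (P(k := P k)) = t" by simp
  then show ?thesis by blast
next
  case False
  then have "xor_d d (P(k := \<not> P k)) = t" using xor_flip[OF k] by simp
  then show ?thesis by blast
qed

definition enc :: "nat \<Rightarrow> bool \<Rightarrow> bool \<Rightarrow> nat" where
 "enc e p m = (if e = 1 then (if p then 2 else 0) + (if m then 1 else 0)
   else if e = 2 then (if p then 1 else 0) + (if m then 2 else 0)
   else (if p then (if m then 1 else 2) else (if m then 3 else 0)))"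

lemma enc_pp: "e \<in> {1,2,3} \<Longrightarrow> pp e (enc e p m) = p"
  unfolding enc_def pp_def by (cases p; cases m; auto)
lemma enc_mu: "e \<in> {1,2,3} \<Longrightarrow> mu e (enc e p m) = m"
  unfolding enc_def mu_def by (cases p; cases m; auto)
lemma enc_lt: "enc e p m < 4"
  unfolding enc_def by (cases p; cases m; auto)

definition pt :: "nat \<Rightarrow> (nat\<Rightarrow>nat) \<Rightarrow> (nat\<Rightarrow>bool) \<Rightarrow> (nat\<Rightarrow>bool) \<Rightarrow> nat \<Rightarrow> nat" where
  "pt d E y z = (\<lambda>i. if i < d then enc (E i) (y i) (z i) else 0)"

lemma pt_idx: "pt d E y z \<in> idx d"
  unfolding idx_def pt_def using enc_lt by auto

lemma pt_pp: "valid_E d E \<Longrightarrow> i < d \<Longrightarrow> pp (E i) (pt d E y z i) = y i"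
  unfolding pt_def valid_E_def using enc_pp by auto
lemma pt_mu: "valid_E d E \<Longrightarrow> i < d \<Longrightarrow> mu (E i) (pt d E y z i) = z i"
  unfolding pt_def valid_E_def using enc_mu by auto

lemma pt_neq: "valid_E d E \<Longrightarrow> i < d \<Longrightarrow> y i \<noteq> y' i \<or> z i \<noteq> z' i
   \<Longrightarrow> pt d E y z i \<noteq> pt d E y' z' i"
  by (metis pt_pp pt_mu)

lemma bp_pt: assumes vE: "valid_E d E"
  shows "block_perm d E lam s (pt d E y z) =
    (if xor_d d y = s \<and> xor_d d z = lam (\<lambda>i. if i < d then y i else False) then 1 else 0)"
proof -
  have a: "xor_d d (\<lambda>i. pp (E i) (pt d E y z i)) = xor_d d y"
    by (rule xor_cong) (simp add: pt_pp[OF vE])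
  have b: "xor_d d (\<lambda>i. mu (E i) (pt d E y z i)) = xor_d d z"
    by (rule xor_cong) (simp add: pt_mu[OF vE])
  have c: "pvec d E (pt d E y z) = (\<lambda>i. if i < d then y i else False)"
    unfolding pvec_def using pt_pp[OF vE] by auto
  show ?thesis unfolding block_perm_def a b c by simp
qed

definition ff :: "nat \<Rightarrow> bool \<Rightarrow> ((nat \<Rightarrow> bool) \<Rightarrow> bool) \<Rightarrow> ((nat \<Rightarrow> bool) \<Rightarrow> bool) \<Rightarrow> (nat \<Rightarrow> bool) \<Rightarrow> bool" where
  "ff d s lam lam' yv = (if xor_d d yv = s then lam (\<lambda>i. if i<d then yv i else False)
      else lam' (\<lambda>i. if i<d then yv i else False))"

lemma good_pt: assumes "valid_E d E" "xor_d d z = ff d s lam lam' y"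
  shows "block_perm d E lam s (pt d E y z) = 1 \<or> block_perm d E lam' (\<not>s) (pt d E y z) = 1"
  using assms by (auto simp: bp_pt ff_def split: if_splits)

lemma diag_exists:
  assumes vE: "valid_E d E" and d0: "0 < d"
    and jS: "jS < d" "y jS = y' jS" and jD: "jD < d" "y jD \<noteq> y' jD"
    and g: "(ff d s lam lam' y \<noteq> ff d s lam lam' (\<lambda>i. \<not> y i)) = (ff d s lam lam' y' \<noteq> ff d s lam lam' (\<lambda>i. \<not> y' i))"
  shows "\<exists>D\<in>diagonals d. \<forall>\<alpha>\<in>D. block_perm d E lam s \<alpha> = 1 \<or> block_perm d E lam' (\<not>s) \<alpha> = 1"
proof -
  let ?f = "ff d s lam lam'"
  define S where "S = (\<lambda>i. y i = y' i)"
  obtain b1 where b1: "xor_d d ((\<lambda>i. False)(0 := b1)) = ?f y" using xor_exists[OF d0] by blast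
  define z1 where "z1 = (\<lambda>i::nat. False)(0 := b1)"
  obtain b2 where b2: "xor_d d ((\<lambda>i. if S i then \<not> z1 i else False)(jD := b2)) = ?f y'"
    using xor_exists[OF jD(1)] by blast
  define z2 where "z2 = (\<lambda>i. if S i then \<not> z1 i else False)(jD := b2)"
  obtain b3 where b3: "xor_d d ((\<lambda>i. if S i then False else \<not> z1 i)(jS := b3)) = ?f (\<lambda>i. \<not> y' i)"
    using xor_exists[OF jS(1)] by blast
  define z3 where "z3 = (\<lambda>i. if S i then False else \<not> z1 i)(jS := b3)"
  define z4 where "z4 = (\<lambda>i. if S i then \<not> z3 i else \<not> z2 i)"
  have SjS: "S jS" and SjD: "\<not> S jD" using jS jD by (auto simp: S_def)
  have Sz2: "S i \<Longrightarrow> z2 i = (\<not> z1 i)" for i using SjD unfolding z2_def by auto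
  have Dz3: "\<not> S i \<Longrightarrow> z3 i = (\<not> z1 i)" for i using SjS unfolding z3_def by auto
  have x1: "xor_d d z1 = ?f y" using b1 z1_def by simp
  have x2: "xor_d d z2 = ?f y'" using b2 z2_def by simp
  have x3: "xor_d d z3 = ?f (\<lambda>i. \<not> y' i)" using b3 z3_def by simp
  have pw: "(\<lambda>i. ((z1 i \<noteq> z2 i) \<noteq> z3 i) \<noteq> z4 i) = (\<lambda>i. False)"
  proof
    fix i show "((z1 i \<noteq> z2 i) \<noteq> z3 i) \<noteq> z4 i = False"
      using Sz2[of i] Dz3[of i] unfolding z4_def by (cases "S i") auto
  qed
  have "xor_d d (\<lambda>i. ((z1 i \<noteq> z2 i) \<noteq> z3 i) \<noteq> z4 i) = False" unfolding pw by (rule xor_false)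
  then have "((xor_d d z1 \<noteq> xor_d d z2) \<noteq> xor_d d z3) \<noteq> xor_d d z4 = False"
    by (simp only: xor_neq)
  then have x4: "xor_d d z4 = ?f (\<lambda>i. \<not> y i)" using x1 x2 x3 g by auto
  define a1 where "a1 = pt d E y z1"
  define a2 where "a2 = pt d E y' z2"
  define a3 where "a3 = pt d E (\<lambda>i. \<not> y' i) z3"
  define a4 where "a4 = pt d E (\<lambda>i. \<not> y i) z4"
  have co: "a1 i \<noteq> a2 i \<and> a1 i \<noteq> a3 i \<and> a1 i \<noteq> a4 i \<and> a2 i \<noteq> a3 i \<and> a2 i \<noteq> a4 i \<and> a3 i \<noteq> a4 i"
    if i: "i < d" for i
  proof -
    have "(y i \<noteq> y' i \<or> z1 i \<noteq> z2 i) \<and> (y i \<noteq> (\<not> y' i) \<or> z1 i \<noteq> z3 i) \<and> (y i \<noteq> (\<not> y i) \<or> z1 i \<noteq> z4 i)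
      \<and> (y' i \<noteq> (\<not> y' i) \<or> z2 i \<noteq> z3 i) \<and> (y' i \<noteq> (\<not> y i) \<or> z2 i \<noteq> z4 i)
      \<and> ((\<not> y' i) \<noteq> (\<not> y i) \<or> z3 i \<noteq> z4 i)"
      using Sz2[of i] Dz3[of i] unfolding z4_def S_def by (cases "y i = y' i") auto
    then show ?thesis unfolding a1_def a2_def a3_def a4_def using pt_neq[OF vE i] by metis
  qed
  have dist: "a1 \<noteq> a2" "a1 \<noteq> a3" "a1 \<noteq> a4" "a2 \<noteq> a3" "a2 \<noteq> a4" "a3 \<noteq> a4"
    using co[OF d0] by auto
  define D where "D = {a1, a2, a3, a4}"
  have "card D = 4" unfolding D_def using dist by simp
  moreover have "D \<subseteq> idx d" unfolding D_def a1_def a2_def a3_def a4_def using pt_idx by auto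
  moreover have "\<forall>\<alpha>\<in>D. \<forall>\<beta>\<in>D. \<alpha> \<noteq> \<beta> \<longrightarrow> (\<forall>i<d. \<alpha> i \<noteq> \<beta> i)"
    unfolding D_def using co by fastforce
  ultimately have "D \<in> diagonals d" unfolding diagonals_def by blast
  moreover have "\<forall>\<alpha>\<in>D. block_perm d E lam s \<alpha> = 1 \<or> block_perm d E lam' (\<not>s) \<alpha> = 1"
    unfolding D_def a1_def a2_def a3_def a4_def
    using good_pt[OF vE x1] good_pt[OF vE x2] good_pt[OF vE x3] good_pt[OF vE x4] by auto
  ultimately show ?thesis by blast
qed


lemma tess_use: assumes t: "tess_neg_inf d E s E' s'" and a: "\<alpha> \<in> idx d"
  shows "\<not> (xor_d d (\<lambda>i. pp (E i) (\<alpha> i)) = s \<and> xor_d d (\<lambda>i. pp (E' i) (\<alpha> i)) = s')"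
proof
  assume h: "xor_d d (\<lambda>i. pp (E i) (\<alpha> i)) = s \<and> xor_d d (\<lambda>i. pp (E' i) (\<alpha> i)) = s'"
  have m: "\<alpha> \<in> subcube d E (\<lambda>i. pp (E i) (\<alpha> i)) \<inter> subcube d E' (\<lambda>i. pp (E' i) (\<alpha> i))"
    using a unfolding subcube_def by auto
  have "filled d s (\<lambda>i. pp (E i) (\<alpha> i)) \<longrightarrow> filled d s' (\<lambda>i. pp (E' i) (\<alpha> i)) \<longrightarrow>
      subcube d E (\<lambda>i. pp (E i) (\<alpha> i)) \<inter> subcube d E' (\<lambda>i. pp (E' i) (\<alpha> i)) = {}"
    using t unfolding tess_neg_inf_def by blast
  then show False using h m unfolding filled_def by auto
qed

lemma enc_other: "e \<in> {1,2,3} \<Longrightarrow> e' \<in> {1,2,3} \<Longrightarrow> e \<noteq> e' \<Longrightarrow>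
   pp e' (enc e False True) \<and> \<not> pp e' (enc e False False)"
  unfolding enc_def pp_def by auto

lemma base_y: assumes j: "j < d" shows "xor_d d ((\<lambda>i::nat. False)(j := s)) = s"
proof (cases s)
  case True
  have "(\<lambda>i::nat. False)(j := True) = (\<lambda>i. i = j)" by (rule ext) simp
  then show ?thesis using True xor_single[OF j] by simp
next
  case False
  have "(\<lambda>i::nat. False)(j := False) = (\<lambda>i. False)" by (rule ext) simp
  then show ?thesis using False xor_false by simp
qed

lemma tess_E: assumes vE: "valid_E d E" and vE': "valid_E d E'" and d2: "2 \<le> d"
  and t: "tess_neg_inf d E s E' s'" and k: "k < d" shows "E' k = E k"
proof (rule ccontr)
  assume ne: "E' k \<noteq> E k"
  define j where "j = (if k = 0 then 1 else (0::nat))"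
  have j: "j < d" "j \<noteq> k" using d2 unfolding j_def by auto
  define y where "y = (\<lambda>i::nat. False)(j := s)"
  have xy: "xor_d d y = s" unfolding y_def by (rule base_y[OF j(1)])
  have yk: "y k = False" using j unfolding y_def by auto
  define a0 where "a0 = pt d E y (\<lambda>i. False)"
  define a1 where "a1 = pt d E y ((\<lambda>i. False)(k := True))"
  have p0: "xor_d d (\<lambda>i. pp (E i) (a0 i)) = s"
    using xor_cong[of d "\<lambda>i. pp (E i) (a0 i)" y] pt_pp[OF vE] xy unfolding a0_def by simp
  have p1: "xor_d d (\<lambda>i. pp (E i) (a1 i)) = s"
    using xor_cong[of d "\<lambda>i. pp (E i) (a1 i)" y] pt_pp[OF vE] xy unfolding a1_def by simp
  have ek: "E k \<in> {1,2,3}" "E' k \<in> {1,2,3}" using vE vE' k unfolding valid_E_def by auto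
  have q: "(\<lambda>i. pp (E' i) (a1 i)) = (\<lambda>i. pp (E' i) (a0 i))(k := \<not> pp (E' k) (a0 k))"
  proof
    fix i show "pp (E' i) (a1 i) = ((\<lambda>i. pp (E' i) (a0 i))(k := \<not> pp (E' k) (a0 k))) i"
    proof (cases "i = k")
      case True
      then show ?thesis using enc_other[OF ek(1) ek(2)] ne k yk unfolding a0_def a1_def pt_def by auto
    next
      case False
      then show ?thesis unfolding a0_def a1_def pt_def by auto
    qed
  qed
  have "xor_d d (\<lambda>i. pp (E' i) (a1 i)) = (\<not> xor_d d (\<lambda>i. pp (E' i) (a0 i)))"
    unfolding q by (rule xor_flip[OF k])
  then show False using tess_use[OF t, of a0] tess_use[OF t, of a1] p0 p1 pt_idx
    unfolding a0_def a1_def by metis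
qed

lemma tess_s: assumes vE: "valid_E d E" and EE: "\<forall>k<d. E' k = E k"
  and t: "tess_neg_inf d E s E' s'" and d0: "0 < d" shows "s' = (\<not> s)"
proof -
  define y where "y = (\<lambda>i::nat. False)(0 := s)"
  have xy: "xor_d d y = s" unfolding y_def by (rule base_y[OF d0])
  define a0 where "a0 = pt d E y (\<lambda>i. False)"
  have p0: "xor_d d (\<lambda>i. pp (E i) (a0 i)) = s"
    using xor_cong[of d "\<lambda>i. pp (E i) (a0 i)" y] pt_pp[OF vE] xy unfolding a0_def by simp
  have p0': "xor_d d (\<lambda>i. pp (E' i) (a0 i)) = s"
    using xor_cong[of d "\<lambda>i. pp (E' i) (a0 i)" "\<lambda>i. pp (E i) (a0 i)"] EE p0 by simp
  show ?thesis using tess_use[OF t, of a0] pt_idx p0 p0' unfolding a0_def by auto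
qed

lemma bp_E: assumes "\<forall>k<d. E' k = E k" shows "block_perm d E' l s \<alpha> = block_perm d E l s \<alpha>"
proof -
  have a: "xor_d d (\<lambda>i. pp (E' i) (\<alpha> i)) = xor_d d (\<lambda>i. pp (E i) (\<alpha> i))"
    by (rule xor_cong) (simp add: assms)
  have b: "xor_d d (\<lambda>i. mu (E' i) (\<alpha> i)) = xor_d d (\<lambda>i. mu (E i) (\<alpha> i))"
    by (rule xor_cong) (simp add: assms)
  have c: "pvec d E' \<alpha> = pvec d E \<alpha>" unfolding pvec_def using assms by auto
  show ?thesis unfolding block_perm_def a b c ..
qed

lemma bp_01: "block_perm d E l s \<alpha> = 0 \<or> block_perm d E l s \<alpha> = 1"
  unfolding block_perm_def by auto

theorem mainTheorem12:
  fixes d :: nat and c :: real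
    and B B' :: "(nat \<Rightarrow> nat) \<Rightarrow> real"
    and E E' :: "nat \<Rightarrow> nat"
    and lam lam' :: "(nat \<Rightarrow> bool) \<Rightarrow> bool"
    and s s' :: bool
  assumes "d \<ge> 3"
    and "0 < c" and "c < 1"
    and "equiv_to d (M4 d) B" and "equiv_to d (M4 d) B'"
    and "is_block_perm_params d B E lam s"
    and "is_block_perm_params d B' E' lam' s'"
    and "tess_neg_inf d E s E' s'"
  shows "per d (\<lambda>\<alpha>. c * B \<alpha> + (1 - c) * B' \<alpha>) > 0"
proof -
  have vE: "valid_E d E" and Beq: "\<forall>\<alpha>\<in>idx d. B \<alpha> = block_perm d E lam s \<alpha>"
    using assms(6) unfolding is_block_perm_params_def by auto
  have vE': "valid_E d E'" and Beq0: "\<forall>\<alpha>\<in>idx d. B' \<alpha> = block_perm d E' lam' s' \<alpha>"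
    using assms(7) unfolding is_block_perm_params_def by auto
  have d0: "0 < d" and d2: "2 \<le> d" using assms(1) by auto
  have EE: "\<forall>k<d. E' k = E k" using tess_E[OF vE vE' d2 assms(8)] by blast
  have ss: "s' = (\<not> s)" by (rule tess_s[OF vE EE assms(8) d0])
  have B'eq: "\<forall>\<alpha>\<in>idx d. B' \<alpha> = block_perm d E lam' (\<not> s) \<alpha>"
    using Beq0 bp_E[OF EE] ss by simp
  let ?G = "\<lambda>y. ff d s lam lam' y \<noteq> ff d s lam lam' (\<lambda>i. \<not> y i)"
  have "\<exists>D\<in>diagonals d. \<forall>\<alpha>\<in>D. block_perm d E lam s \<alpha> = 1 \<or> block_perm d E lam' (\<not>s) \<alpha> = 1"
  proof (cases "?G (\<lambda>i. False) = ?G (\<lambda>i. i = 0)")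
    case True
    then show ?thesis using diag_exists[OF vE d0, of 2 "\<lambda>i. False" "\<lambda>i. i = 0" 0] assms(1) by auto
  next
    case F1: False
    show ?thesis
    proof (cases "?G (\<lambda>i. False) = ?G (\<lambda>i. i = 1)")
      case True
      then show ?thesis using diag_exists[OF vE d0, of 2 "\<lambda>i. False" "\<lambda>i. i = 1" 1] assms(1) by auto
    next
      case False
      then have "?G (\<lambda>i. i = 0) = ?G (\<lambda>i. i = 1)" using F1 by blast
      then show ?thesis using diag_exists[OF vE d0, of 2 "\<lambda>i. i = 0" "\<lambda>i. i = 1" 0] assms(1) by auto
    qed
  qed
  then obtain D where D: "D \<in> diagonals d"
    and DB: "\<forall>\<alpha>\<in>D. block_perm d E lam s \<alpha> = 1 \<or> block_perm d E lam' (\<not>s) \<alpha> = 1" by blast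
  define A where "A = (\<lambda>\<alpha>. c * B \<alpha> + (1 - c) * B' \<alpha>)"
  have fin_idx: "finite (idx d)"
  proof -
    have "idx d = {f. \<forall>x. (x \<in> {..<d} \<longrightarrow> f x \<in> {..<4::nat}) \<and> (x \<notin> {..<d} \<longrightarrow> f x = 0)}"
      unfolding idx_def by auto
    then show ?thesis using finite_set_of_finite_funs[of "{..<d}" "{..<4::nat}" 0] by simp
  qed
  have fin_diag: "finite (diagonals d)"
    by (rule finite_subset[of _ "Pow (idx d)"]) (auto simp: diagonals_def fin_idx)
  have Bnn: "\<alpha> \<in> idx d \<Longrightarrow> 0 \<le> B \<alpha> \<and> 0 \<le> B' \<alpha>" for \<alpha>
    using Beq B'eq bp_01[of d E lam s \<alpha>] bp_01[of d E lam' "\<not> s" \<alpha>] by auto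
  have Ann: "\<alpha> \<in> idx d \<Longrightarrow> 0 \<le> A \<alpha>" for \<alpha>
    using Bnn[of \<alpha>] assms(2,3) unfolding A_def by simp
  have Dsub: "D \<subseteq> idx d" using D unfolding diagonals_def by auto
  have Apos: "\<alpha> \<in> D \<Longrightarrow> 0 < A \<alpha>" for \<alpha>
  proof -
    assume a: "\<alpha> \<in> D"
    then have ai: "\<alpha> \<in> idx d" using Dsub by auto
    have "B \<alpha> = 1 \<or> B' \<alpha> = 1" using DB a ai Beq B'eq by auto
    moreover have "0 \<le> c * B \<alpha>" "0 \<le> (1 - c) * B' \<alpha>" using Bnn[OF ai] assms(2,3) by auto
    ultimately show ?thesis unfolding A_def using assms(2,3) by auto
  qed
  have "0 < (\<Prod>\<alpha>\<in>D. A \<alpha>)" by (rule prod_pos) (use Apos in auto)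
  also have "(\<Prod>\<alpha>\<in>D. A \<alpha>) \<le> (\<Sum>D'\<in>diagonals d. \<Prod>\<alpha>\<in>D'. A \<alpha>)"
  proof (rule member_le_sum[OF D _ fin_diag])
    fix x assume "x \<in> diagonals d - {D}"
    then have "x \<subseteq> idx d" unfolding diagonals_def by auto
    then show "0 \<le> (\<Prod>\<alpha>\<in>x. A \<alpha>)" using Ann by (intro prod_nonneg) auto
  qed
  finally show ?thesis unfolding per_def A_def .
qed

end
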